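(* A weighted pushdown system $\mathcal{A}$ has a good cycle (reachable from the initial configuration) if and only if its summary graph $\mathrm{Gr}(\mathcal{A})$ has a positive simple cycle (reachable from $(q_0,\bot)$).
   Context: A weighted pushdown system (WPS) is $\mathcal{A}=\langle Q,\Gamma,q_0,E,w\rangle$ with finite states $Q$, finite stack alphabet $\Gamma\ni\bot$ ($\bot$ never pushed or popped), edges $E\subseteq(Q\times\Gamma)\times(Q\times\mathrm{Com}(\Gamma))$, $\mathrm{Com}(\Gamma)=\{\mathit{skip},\mathit{pop}\}\cup\{\mathit{push}(z)\}$, weights $w:E\to\mathbb{Z}$; initial configuration $(\bot,q_0)$. Configurations $(\alpha,q)$, $\alpha\in\Gamma^+$; successor via an edge $(q,\mathrm{Top}(\alpha),q',\mathit{com})$ yields $(\mathit{com}(\alpha),q')$. A configuration $(\alpha_i,q_i)$ in a path is a local minimum if $\alpha_i$ is a prefix of all later stacks in the path. A good cycle is a finite path $\langle(\alpha_1,q_1),\dots,(\alpha_n,q_n)\rangle$ of positive weight whose first configuration is a local minimum, with $q_1=q_n$ and $\mathrm{Top}(\alpha_1)=\mathrm{Top}(\alpha_n)$. A path from $(\alpha\gamma,q_1)$ is non-decreasing if its first configuration is a local minimum. The summary function $s(q_1,\gamma,q_2)$ equals $\omega$ if non-decreasing paths from $(\bot\gamma,q_1)$ to $(\bot\gamma,q_2)$ of arbitrarily large weight exist, else the maximum weight of such a path, and $-\infty$ if none exists. The summary graph $\mathrm{Gr}(\mathcal{A})$ has vertices $Q\times\Gamma$ and edges: $((q_1,\gamma),(q_2,\gamma))$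 with weight $s(q_1,\gamma,q_2)$ whenever $s(q_1,\gamma,q_2)>-\infty$, and $((q_1,\gamma_1),(q_2,\gamma_2))$ with weight $w(e)$ for every edge $e=(q_1,\gamma_1,q_2,\mathit{push}(\gamma_2))\in E$. A simple cycle of $\mathrm{Gr}(\mathcal{A})$ is positive if it contains an edge of weight $\omega$ or its total weight is positive. *)

theory Defs
  imports Main "HOL-Library.Extended_Real" "HOL-Library.Sublist"
begin

datatype 'g com = Skip | Pop | Push 'g

text \<open>An edge (q1, gamma, q2, com): in state q1 with top-of-stack gamma, go to q2 and
  perform com.  States are a finite type 'q, the stack alphabet a finite type 'g.\<close>
type_synonym ('q,'g) edge = "'q \<times> 'g \<times> 'q \<times> 'g com"

text \<open>A configuration (alpha, q); the stack alpha is a list written bottom first,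
  so the top of the stack is the last element.\<close>
type_synonym ('q,'g) config = "'g list \<times> 'q"

definition stack_top :: "'g list \<Rightarrow> 'g" where
  "stack_top \<alpha> = last \<alpha>"

fun apply_com :: "'g com \<Rightarrow> 'g list \<Rightarrow> 'g list" where
  "apply_com Skip \<alpha> = \<alpha>"
| "apply_com Pop \<alpha> = butlast \<alpha>"
| "apply_com (Push z) \<alpha> = \<alpha> @ [z]"

definition wf_wps :: "'g \<Rightarrow> ('q,'g) edge set \<Rightarrow> bool" where
  "wf_wps bt E \<longleftrightarrow> finite E \<and>
     (\<forall>q1 \<gamma> q2 c. (q1, \<gamma>, q2, c) \<in> E \<longrightarrow> (c = Pop \<longrightarrow> \<gamma> \<noteq> bt) \<and> c \<noteq> Push bt)"

definition step :: "('q,'g) edge set \<Rightarrow> ('q,'g) config \<Rightarrow> ('q,'g) edge \<Rightarrow> ('q,'g) config \<Rightarrow> bool" where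
  "step E c e c' \<longleftrightarrow> e \<in> E \<and>
     (case e of (q1, \<gamma>, q2, cm) \<Rightarrow>
        snd c = q1 \<and> stack_top (fst c) = \<gamma> \<and> c' = (apply_com cm (fst c), q2))"

definition is_path :: "('q,'g) edge set \<Rightarrow> ('q,'g) config list \<Rightarrow> ('q,'g) edge list \<Rightarrow> bool" where
  "is_path E cs es \<longleftrightarrow> length cs = Suc (length es) \<and>
     (\<forall>i < length es. step E (cs ! i) (es ! i) (cs ! Suc i))"

definition path_weight :: "(('q,'g) edge \<Rightarrow> int) \<Rightarrow> ('q,'g) edge list \<Rightarrow> int" where
  "path_weight w es = sum_list (map w es)"

definition is_local_min :: "('q,'g) config list \<Rightarrow> nat \<Rightarrow> bool" where
  "is_local_min cs i \<longleftrightarrow> (\<forall>j. i \<le> j \<and> j < length cs \<longrightarrow> prefix (fst (cs ! i)) (fst (cs ! j)))"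

definition good_cycle :: "('q,'g) edge set \<Rightarrow> (('q,'g) edge \<Rightarrow> int) \<Rightarrow>
    ('q,'g) config list \<Rightarrow> ('q,'g) edge list \<Rightarrow> bool" where
  "good_cycle E w cs es \<longleftrightarrow> is_path E cs es \<and> path_weight w es > 0 \<and> is_local_min cs 0 \<and>
     snd (hd cs) = snd (last cs) \<and> stack_top (fst (hd cs)) = stack_top (fst (last cs))"

definition has_reachable_good_cycle :: "'g \<Rightarrow> 'q \<Rightarrow> ('q,'g) edge set \<Rightarrow> (('q,'g) edge \<Rightarrow> int) \<Rightarrow> bool" where
  "has_reachable_good_cycle bt q0 E w \<longleftrightarrow>
     (\<exists>cs0 es0 cs es. is_path E cs0 es0 \<and> hd cs0 = ([bt], q0) \<and>
        good_cycle E w cs es \<and> hd cs = last cs0)"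

definition base_stack :: "'g \<Rightarrow> 'g \<Rightarrow> 'g list" where
  "base_stack bt \<gamma> = (if \<gamma> = bt then [bt] else [bt, \<gamma>])"

definition nondecr_weights :: "'g \<Rightarrow> ('q,'g) edge set \<Rightarrow> (('q,'g) edge \<Rightarrow> int) \<Rightarrow>
    'q \<Rightarrow> 'g \<Rightarrow> 'q \<Rightarrow> int set" where
  "nondecr_weights bt E w q1 \<gamma> q2 =
     {path_weight w es | cs es. is_path E cs es \<and> is_local_min cs 0 \<and>
        hd cs = (base_stack bt \<gamma>, q1) \<and> last cs = (base_stack bt \<gamma>, q2)}"

definition summary :: "'g \<Rightarrow> ('q,'g) edge set \<Rightarrow> (('q,'g) edge \<Rightarrow> int) \<Rightarrow>
    'q \<Rightarrow> 'g \<Rightarrow> 'q \<Rightarrow> ereal" where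
  "summary bt E w q1 \<gamma> q2 =
     (let W = nondecr_weights bt E w q1 \<gamma> q2 in
      if W = {} then -\<infinity>
      else if \<not> bdd_above W then \<infinity>
      else ereal (real_of_int (GREATEST x. x \<in> W)))"

datatype ('q,'g) gedge = SumE 'q 'g 'q | PushE "('q,'g) edge"

fun gsrc :: "('q,'g) gedge \<Rightarrow> 'q \<times> 'g" where
  "gsrc (SumE q1 \<gamma> q2) = (q1, \<gamma>)"
| "gsrc (PushE (q1, \<gamma>1, q2, c)) = (q1, \<gamma>1)"

fun gtgt :: "('q,'g) gedge \<Rightarrow> 'q \<times> 'g" where
  "gtgt (SumE q1 \<gamma> q2) = (q2, \<gamma>)"
| "gtgt (PushE (q1, \<gamma>1, q2, Push \<gamma>2)) = (q2, \<gamma>2)"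
| "gtgt (PushE (q1, \<gamma>1, q2, c)) = (q2, \<gamma>1)" \<comment> \<open>irrelevant: only push edges occur\<close>

fun gweight :: "'g \<Rightarrow> ('q,'g) edge set \<Rightarrow> (('q,'g) edge \<Rightarrow> int) \<Rightarrow> ('q,'g) gedge \<Rightarrow> ereal" where
  "gweight bt E w (SumE q1 \<gamma> q2) = summary bt E w q1 \<gamma> q2"
| "gweight bt E w (PushE e) = ereal (real_of_int (w e))"

definition summary_graph :: "'g \<Rightarrow> ('q,'g) edge set \<Rightarrow> (('q,'g) edge \<Rightarrow> int) \<Rightarrow> ('q,'g) gedge set" where
  "summary_graph bt E w =
     {SumE q1 \<gamma> q2 | q1 \<gamma> q2. summary bt E w q1 \<gamma> q2 > -\<infinity>}
     \<union> {PushE (q1, \<gamma>1, q2, Push \<gamma>2) | q1 \<gamma>1 q2 \<gamma>2. (q1, \<gamma>1, q2, Push \<gamma>2) \<in> E}"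

definition is_simple_cycle :: "('q,'g) gedge set \<Rightarrow> ('q,'g) gedge list \<Rightarrow> bool" where
  "is_simple_cycle G gs \<longleftrightarrow> gs \<noteq> [] \<and> set gs \<subseteq> G \<and>
     (\<forall>i. Suc i < length gs \<longrightarrow> gtgt (gs ! i) = gsrc (gs ! Suc i)) \<and>
     gtgt (last gs) = gsrc (hd gs) \<and> distinct (map gsrc gs)"

definition positive_cycle :: "(('q,'g) gedge \<Rightarrow> ereal) \<Rightarrow> ('q,'g) gedge list \<Rightarrow> bool" where
  "positive_cycle wt gs \<longleftrightarrow> (\<exists>g \<in> set gs. wt g = \<infinity>) \<or> sum_list (map wt gs) > 0"

definition graph_rel :: "('q,'g) gedge set \<Rightarrow> (('q \<times> 'g) \<times> ('q \<times> 'g)) set" where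
  "graph_rel G = {(gsrc g, gtgt g) | g. g \<in> G}"

definition has_reachable_positive_simple_cycle :: "'g \<Rightarrow> 'q \<Rightarrow> ('q,'g) edge set \<Rightarrow> (('q,'g) edge \<Rightarrow> int) \<Rightarrow> bool" where
  "has_reachable_positive_simple_cycle bt q0 E w \<longleftrightarrow>
     (\<exists>gs. is_simple_cycle (summary_graph bt E w) gs \<and>
        positive_cycle (gweight bt E w) gs \<and>
        ((q0, bt), gsrc (hd gs)) \<in> (graph_rel (summary_graph bt E w))\<^sup>*)"

end

theory Submission
  imports Defs
begin


fun pth :: "('q,'g) edge set \<Rightarrow> ('q,'g) config list \<Rightarrow> ('q,'g) edge list \<Rightarrow> bool" where
  "pth E [c] [] = True"
| "pth E (c # c' # cs) (e # es) = (step E c e c' \<and> pth E (c' # cs) es)"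
| "pth E _ _ = False"

lemma is_path_pth: "is_path E cs es = pth E cs es"
proof (induction E cs es rule: pth.induct)
  case (2 E c c' cs e es)
  show ?case
    by (simp add: 2[symmetric] is_path_def All_less_Suc2) blast
qed (auto simp: is_path_def)

lemma pth_ne: "pth E cs es \<Longrightarrow> cs \<noteq> []"
  by (cases cs) auto

lemma pth_append:
  "pth E (xs @ [c]) es1 \<Longrightarrow> pth E (c # ys) es2 \<Longrightarrow> pth E (xs @ c # ys) (es1 @ es2)"
proof (induction xs arbitrary: es1)
  case Nil
  then show ?case by (cases es1) auto
next
  case (Cons a xs)
  then show ?case by (cases xs; cases es1) auto
qed

lemma pth_split:
  "pth E (xs @ c # ys) es \<Longrightarrow> \<exists>es1 es2. es = es1 @ es2 \<and> pth E (xs @ [c]) es1 \<and> pth E (c # ys) es2"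
proof (induction xs arbitrary: es)
  case Nil
  then show ?case by (intro exI[of _ "[]"] exI[of _ es]) auto
next
  case (Cons a xs)
  obtain e es' where es: "es = e # es'" using Cons.prems by (cases es; cases xs) auto
  show ?case
  proof (cases xs)
    case Nil
    then show ?thesis using Cons.prems es by (intro exI[of _ "[e]"] exI[of _ es']) auto
  next
    case (Cons x xs')
    have "pth E (xs @ c # ys) es'" "step E a e x" using Cons.prems es \<open>xs = x # xs'\<close> by auto
    then obtain es1 es2 where "es' = es1 @ es2" "pth E (xs @ [c]) es1" "pth E (c # ys) es2"
      using Cons.IH by blast
    then show ?thesis using es \<open>step E a e x\<close> \<open>xs = x # xs'\<close>
      by (intro exI[of _ "e # es1"] exI[of _ es2]) auto
  qed
qed

lemma pth_last_snoc: "pth E cs es \<Longrightarrow> last cs = c \<Longrightarrow> \<exists>xs. cs = xs @ [c]"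
  by (metis append_butlast_last_id pth_ne)

lemma pth_hd_cons: "pth E cs es \<Longrightarrow> hd cs = c \<Longrightarrow> \<exists>ys. cs = c # ys"
  by (metis list.collapse pth_ne)

definition pw where "pw w es = path_weight w es"

lemma path_weight_append: "path_weight w (a @ b) = path_weight w a + path_weight w b"
  by (simp add: path_weight_def)
lemma path_weight_Cons: "path_weight w (e # b) = w e + path_weight w b"
  by (simp add: path_weight_def)
lemma path_weight_Nil: "path_weight w [] = 0"
  by (simp add: path_weight_def)

lemma local_min_iff: "cs \<noteq> [] \<Longrightarrow> is_local_min cs 0 \<longleftrightarrow> (\<forall>c\<in>set cs. prefix (fst (hd cs)) (fst c))"
  by (simp add: is_local_min_def hd_conv_nth all_set_conv_all_nth)

definition shiftc :: "'g list \<Rightarrow> 'g list \<Rightarrow> ('q,'g) config \<Rightarrow> ('q,'g) config" where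
  "shiftc P P' c = (P' @ drop (length P) (fst c), snd c)"

lemma shift_path:
  assumes "pth E cs es" "\<forall>c\<in>set cs. prefix P (fst c)" "P \<noteq> []" "P' \<noteq> []" "last P = last P'"
  shows "pth E (map (shiftc P P') cs) es"
  using assms
proof (induction E cs es rule: pth.induct)
  case (2 E c c' cs e es)
  obtain q1 \<gamma> q2 cm where e: "e = (q1, \<gamma>, q2, cm)" by (cases e) auto
  obtain s where s: "fst c = P @ s" using 2(3) by (auto simp: prefix_def)
  obtain s' where s': "fst c' = P @ s'" using 2(3) by (auto simp: prefix_def)
  have st: "step E c e c'" using 2 by simp
  have top: "stack_top (P' @ s) = stack_top (P @ s)"
    using 2(5,6) by (cases "s = []") (auto simp: stack_top_def)
  have "step E (shiftc P P' c) e (shiftc P P' c')"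
  proof (cases cm)
    case Skip then show ?thesis using st e s s' top by (auto simp: step_def shiftc_def)
  next
    case (Push z) then show ?thesis using st e s s' top by (auto simp: step_def shiftc_def)
  next
    case Pop
    have "butlast (P @ s) = P @ s'" using st e s s' Pop by (auto simp: step_def)
    have "s \<noteq> []"
    proof
      assume "s = []"
      with \<open>butlast (P @ s) = P @ s'\<close> have "length (butlast P) = length (P @ s')" by simp
      then have "length P - 1 = length P + length s'" by simp
      moreover have "length P > 0" using \<open>P \<noteq> []\<close> by simp
      ultimately show False by linarith
    qed
    then show ?thesis using st e s s' top Pop by (auto simp: step_def shiftc_def butlast_append)
  qed
  then show ?case using 2 by simp
qed auto




lemma int_greatest:
  fixes W :: "int set"
  assumes "W \<noteq> {}" "bdd_above W"
  shows "(GREATEST x. x \<in> W) \<in> W \<and> (\<forall>y\<in>W. y \<le> (GREATEST x. x \<in> W))"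
proof -
  obtain x0 where x0: "x0 \<in> W" using assms by auto
  obtain B where B: "\<forall>y\<in>W. y \<le> B" using assms(2) by (auto simp: bdd_above_def)
  define M where "M = Max (W \<inter> {x0..B})"
  have fin: "finite (W \<inter> {x0..B})" by simp
  have ne: "W \<inter> {x0..B} \<noteq> {}" using x0 B by auto
  have M1: "M \<in> W" using Max_in[OF fin ne] unfolding M_def by auto
  have M2: "\<forall>y\<in>W. y \<le> M"
  proof
    fix y assume y: "y \<in> W"
    have "x0 \<le> M" using Max_ge[OF fin] x0 B unfolding M_def by auto
    then show "y \<le> M" using Max_ge[OF fin, of y] y B unfolding M_def
      by (cases "x0 \<le> y") auto
  qed
  have "(GREATEST x. x \<in> W) = M"
    by (rule Greatest_equality) (use M1 M2 in auto)
  then show ?thesis using M1 M2 by simp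
qed

lemma nd_in:
  assumes "pth E cs es" "\<forall>c\<in>set cs. prefix (fst (hd cs)) (fst c)"
    "hd cs = (base_stack bt \<gamma>, q1)" "last cs = (base_stack bt \<gamma>, q2)"
  shows "path_weight w es \<in> nondecr_weights bt E w q1 \<gamma> q2"
  unfolding nondecr_weights_def mem_Collect_eq
  apply (rule exI[of _ cs], rule exI[of _ es])
  using assms pth_ne[OF assms(1)] by (simp add: is_path_pth local_min_iff)

lemma nd_path:
  assumes "x \<in> nondecr_weights bt E w q1 \<gamma> q2"
  shows "\<exists>cs es. pth E cs es \<and> (\<forall>c\<in>set cs. prefix (base_stack bt \<gamma>) (fst c)) \<and>
     hd cs = (base_stack bt \<gamma>, q1) \<and> last cs = (base_stack bt \<gamma>, q2) \<and> path_weight w es = x"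
  using assms unfolding nondecr_weights_def
  by (auto simp: is_path_pth) (metis fst_conv local_min_iff pth_ne)

lemma summary_ge:
  assumes "x \<in> nondecr_weights bt E w q1 \<gamma> q2"
  shows "ereal (real_of_int x) \<le> summary bt E w q1 \<gamma> q2"
proof -
  let ?W = "nondecr_weights bt E w q1 \<gamma> q2"
  show ?thesis
  proof (cases "bdd_above ?W")
    case True
    then show ?thesis using int_greatest[of ?W] assms by (auto simp: summary_def Let_def)
  qed (use assms in \<open>auto simp: summary_def Let_def\<close>)
qed

lemma summary_inf:
  assumes "summary bt E w q1 \<gamma> q2 = \<infinity>"
  shows "\<exists>x\<in>nondecr_weights bt E w q1 \<gamma> q2. N \<le> x"
  using assms unfolding summary_def Let_def bdd_above_def
  by (auto split: if_splits) (meson linorder_le_cases)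

lemma summary_fin:
  assumes "summary bt E w q1 \<gamma> q2 = ereal r"
  shows "\<exists>x\<in>nondecr_weights bt E w q1 \<gamma> q2. r = real_of_int x"
  using assms int_greatest[of "nondecr_weights bt E w q1 \<gamma> q2"] unfolding summary_def Let_def
  by (auto split: if_splits)

lemma base_stack_ne: "base_stack bt \<gamma> \<noteq> []" and base_stack_last: "last (base_stack bt \<gamma>) = \<gamma>"
  by (auto simp: base_stack_def)

lemma sg_SumE: "SumE q1 \<gamma> q2 \<in> summary_graph bt E w \<longleftrightarrow> summary bt E w q1 \<gamma> q2 > -\<infinity>"
  by (auto simp: summary_graph_def)

lemma sg_PushE: "PushE e \<in> summary_graph bt E w \<longleftrightarrow> (\<exists>a b c z. e = (a,b,c,Push z) \<and> e \<in> E)"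
  by (auto simp: summary_graph_def)

fun walk :: "'q \<times> 'g \<Rightarrow> ('q,'g) gedge list \<Rightarrow> 'q \<times> 'g \<Rightarrow> bool" where
  "walk v [] v' = (v = v')"
| "walk v (g # gs) v' = (gsrc g = v \<and> walk (gtgt g) gs v')"

lemma walk_append: "walk v (xs @ ys) v' \<longleftrightarrow> (\<exists>u. walk v xs u \<and> walk u ys v')"
  by (induction xs arbitrary: v) auto

lemma walk_idx: "walk u gs v \<Longrightarrow> Suc i < length gs \<Longrightarrow> gtgt (gs ! i) = gsrc (gs ! Suc i)"
proof (induction gs arbitrary: u i)
  case (Cons g gs)
  have w: "walk (gtgt g) gs v" using Cons.prems by simp
  show ?case
  proof (cases i)
    case 0
    then obtain h hs where "gs = h # hs" using Cons.prems by (cases gs) auto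
    then show ?thesis using w 0 by simp
  next
    case (Suc j)
    then show ?thesis using Cons.IH[OF w, of j] Cons.prems by simp
  qed
qed simp

lemma walk_ends: "walk u gs v \<Longrightarrow> gs \<noteq> [] \<Longrightarrow> gsrc (hd gs) = u \<and> gtgt (last gs) = v"
proof (induction gs arbitrary: u)
  case (Cons g gs)
  then show ?case by (cases gs) auto
qed auto

lemma idx_walk: "gs \<noteq> [] \<Longrightarrow> (\<forall>i. Suc i < length gs \<longrightarrow> gtgt (gs ! i) = gsrc (gs ! Suc i)) \<Longrightarrow>
  walk (gsrc (hd gs)) gs (gtgt (last gs))"
proof (induction gs)
  case (Cons g gs)
  show ?case
  proof (cases gs)
    case (Cons h hs)
    have "\<forall>i. Suc i < length gs \<longrightarrow> gtgt (gs ! i) = gsrc (gs ! Suc i)"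
    proof (intro allI impI)
      fix i assume "Suc i < length gs"
      then show "gtgt (gs ! i) = gsrc (gs ! Suc i)" using Cons.prems(2)[rule_format, of "Suc i"] by simp
    qed
    moreover have "gtgt g = gsrc (hd gs)" using Cons.prems(2)[rule_format, of 0] Cons by auto
    ultimately show ?thesis using Cons.IH Cons by auto
  qed auto
qed auto

lemma walk_reach: "walk v gs v' \<Longrightarrow> set gs \<subseteq> G \<Longrightarrow>
   (v, v') \<in> (graph_rel G)\<^sup>* \<and> (\<forall>g\<in>set gs. (v, gsrc g) \<in> (graph_rel G)\<^sup>*)"
proof (induction gs arbitrary: v)
  case (Cons g gs)
  have "(gsrc g, gtgt g) \<in> graph_rel G" using Cons.prems by (auto simp: graph_rel_def)
  moreover have "(gtgt g, v') \<in> (graph_rel G)\<^sup>* \<and> (\<forall>h\<in>set gs. (gtgt g, gsrc h) \<in> (graph_rel G)\<^sup>*)"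
    using Cons.IH[of "gtgt g"] Cons.prems by auto
  ultimately have r: "(v, gtgt g) \<in> (graph_rel G)\<^sup>*" "(gtgt g, v') \<in> (graph_rel G)\<^sup>*"
     "\<forall>h\<in>set gs. (gtgt g, gsrc h) \<in> (graph_rel G)\<^sup>*" using Cons.prems by auto
  have "(v, v') \<in> (graph_rel G)\<^sup>*" using r(1,2) by (rule rtrancl_trans)
  moreover have "\<forall>h\<in>set (g # gs). (v, gsrc h) \<in> (graph_rel G)\<^sup>*"
  proof
    fix h assume "h \<in> set (g # gs)"
    then consider "h = g" | "h \<in> set gs" by auto
    then show "(v, gsrc h) \<in> (graph_rel G)\<^sup>*"
    proof cases
      case 1
      have "gsrc g = v" using Cons.prems(1) by simp
      then show ?thesis using 1 by simp
    next
      case 2 show ?thesis by (rule rtrancl_trans[OF r(1)]) (use r(3) 2 in blast)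
    qed
  qed
  ultimately show ?case by blast
qed simp




lemma prefix_snoc_trans: "prefix (\<alpha> @ [z]) x \<Longrightarrow> prefix \<alpha> x"
  by (metis append.assoc prefix_def)



lemma push_prefix:
  assumes "pth E cs es" "prefix (P @ [z]) (fst (hd cs))" "\<forall>x\<in>set cs. prefix P (fst x) \<and> fst x \<noteq> P"
  shows "\<forall>x\<in>set cs. prefix (P @ [z]) (fst x)"
  using assms
proof (induction E cs es rule: pth.induct)
  case (2 E c c' cs e es)
  obtain q1 \<gamma> q2 cm where e: "e = (q1, \<gamma>, q2, cm)" by (cases e)
  have st: "step E c e c'" using 2(2) by simp
  obtain s where s: "fst c = P @ [z] @ s" using 2(3) by (auto simp: prefix_def)
  have c': "fst c' = apply_com cm (fst c)" using st e by (auto simp: step_def)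
  have ne: "fst c' \<noteq> P" using 2(4) by simp
  have pc': "prefix (P @ [z]) (fst c')"
  proof (cases cm)
    case Skip then show ?thesis using c' s by simp
  next
    case (Push y) then show ?thesis using c' s by simp
  next
    case Pop
    have "s \<noteq> []"
    proof
      assume "s = []" then have "fst c' = P" using c' s Pop by simp
      with ne show False by simp
    qed
    then show ?thesis using c' s Pop by (simp add: butlast_append)
  qed
  have "pth E (c' # cs) es" using 2(2) by simp
  then have "\<forall>x\<in>set (c' # cs). prefix (P @ [z]) (fst x)"
    using 2(1) pc' 2(4) by simp
  then show ?case using 2(3) by simp
qed auto



lemma lemA:
  assumes "pth E cs es" "\<forall>c\<in>set cs. prefix P (fst c)" "hd cs = (P, q)" "P \<noteq> []" "last cs = (\<alpha>', q')"
  shows "\<exists>gs. set gs \<subseteq> summary_graph bt E w \<and> walk (q, last P) gs (q', last \<alpha>') \<and>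
     ereal (real_of_int (path_weight w es)) \<le> sum_list (map (gweight bt E w) gs)"
  using assms
proof (induction "length cs" arbitrary: cs es P q rule: less_induct)
  case less
  note pre = less.prems
  let ?\<gamma> = "last P"
  have "\<exists>x\<in>set cs. fst x = P" using pre(1,3) pth_ne by (metis fst_conv list.set_sel(1))
  then obtain xs c ys where cs: "cs = xs @ c # ys" and cP: "fst c = P" and ys: "\<forall>y\<in>set ys. fst y \<noteq> P"
    using split_list_last_prop[of cs "\<lambda>x. fst x = P"] by blast
  obtain es1 es2 where es: "es = es1 @ es2" and p1: "pth E (xs @ [c]) es1" and p2: "pth E (c # ys) es2"
    using pth_split pre(1) cs by blast
  obtain qc where c: "c = (P, qc)" using cP by (cases c) auto
  define B where "B = base_stack bt ?\<gamma>"
  have Bne: "B \<noteq> []" "last B = ?\<gamma>" by (simp_all add: B_def base_stack_ne base_stack_last)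
  have all1: "\<forall>x\<in>set (xs @ [c]). prefix P (fst x)" using pre(2) cs by auto
  have sp: "pth E (map (shiftc P B) (xs @ [c])) es1"
    using shift_path[OF p1 all1 pre(4) Bne(1)] Bne(2) by simp
  have hd1: "hd (xs @ [c]) = (P, q)" using pre(3) cs by (cases xs) auto
  have shd: "hd (map (shiftc P B) (xs @ [c])) = (B, q)" using hd1 by (cases xs) (simp_all add: shiftc_def)
  have slast: "last (map (shiftc P B) (xs @ [c])) = (B, qc)" using c by (simp add: shiftc_def)
  have sall: "\<forall>x\<in>set (map (shiftc P B) (xs @ [c])). prefix (fst (hd (map (shiftc P B) (xs @ [c])))) (fst x)"
    using shd by (auto simp: shiftc_def)
  have "path_weight w es1 \<in> nondecr_weights bt E w q ?\<gamma> qc"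
    apply (rule nd_in[OF sp sall]) using shd slast by (simp_all add: B_def)
  then have sum1: "ereal (real_of_int (path_weight w es1)) \<le> summary bt E w q ?\<gamma> qc" by (rule summary_ge)
  have "-\<infinity> < summary bt E w q ?\<gamma> qc" by (rule less_le_trans[OF _ sum1]) simp
  then have g1: "SumE q ?\<gamma> qc \<in> summary_graph bt E w" by (simp add: sg_SumE)
  show ?case
  proof (cases ys)
    case Nil
    have "es2 = []" using p2 Nil by (cases es2) auto
    have "last cs = c" using cs Nil by simp
    then have "\<alpha>' = P" "q' = qc" using pre(5) c by auto
    show ?thesis
      apply (rule exI[of _ "[SumE q ?\<gamma> qc]"])
      using g1 sum1 es \<open>es2 = []\<close> \<open>\<alpha>' = P\<close> \<open>q' = qc\<close> by simp
  next
    case (Cons y ys')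
    obtain e es2' where es2: "es2 = e # es2'" using p2 Cons by (cases es2) auto
    have st: "step E c e y" and p3: "pth E (y # ys') es2'" using p2 Cons es2 by auto
    obtain a1 b1 q2 cm where e: "e = (a1, b1, q2, cm)" by (cases e)
    have eE: "e \<in> E" and a1: "a1 = qc" and b1: "b1 = ?\<gamma>" and y: "y = (apply_com cm P, q2)"
      using st e c by (auto simp: step_def stack_top_def)
    have ypre: "prefix P (fst y)" and yne: "fst y \<noteq> P" using pre(2) cs Cons ys by auto
    obtain z where cm: "cm = Push z"
    proof (cases cm)
      case Skip then show ?thesis using y yne by simp
    next
      case Pop
      then have "prefix P (butlast P)" using ypre y by simp
      then have "length P \<le> length (butlast P)" by (rule prefix_length_le)
      moreover have "length P > 0" using pre(4) by simp
      ultimately have False by (simp only: length_butlast)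
      then show ?thesis ..
    next
      case (Push z) then show ?thesis using that by blast
    qed
    have yv: "y = (P @ [z], q2)" using y cm by simp
    have all2: "\<forall>x\<in>set (y # ys'). prefix (P @ [z]) (fst x)"
      apply (rule push_prefix[OF p3])
      using yv pre(2) cs Cons ys by auto
    have len: "length (y # ys') < length cs" using cs Cons by simp
    have lst: "last (y # ys') = (\<alpha>', q')" using pre(5) cs Cons by simp
    have h2: "hd (y # ys') = (P @ [z], q2)" using yv by simp
    have ne2: "P @ [z] \<noteq> []" by simp
    obtain gs where gs: "set gs \<subseteq> summary_graph bt E w" "walk (q2, last (P @ [z])) gs (q', last \<alpha>')"
      "ereal (real_of_int (path_weight w es2')) \<le> sum_list (map (gweight bt E w) gs)"
      using less.hyps[OF len p3 all2 h2 ne2 lst] by blast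
    have gP: "PushE e \<in> summary_graph bt E w" using eE e cm by (auto simp: sg_PushE)
    show ?thesis
    proof (rule exI[of _ "SumE q ?\<gamma> qc # PushE e # gs"], intro conjI)
      show "set (SumE q ?\<gamma> qc # PushE e # gs) \<subseteq> summary_graph bt E w" using g1 gP gs(1) by simp
      show "walk (q, ?\<gamma>) (SumE q ?\<gamma> qc # PushE e # gs) (q', last \<alpha>')"
        using gs(2) e a1 b1 cm by simp
      have "path_weight w es = path_weight w es1 + w e + path_weight w es2'"
        using es es2 by (simp add: path_weight_def)
      then have "ereal (real_of_int (path_weight w es)) = ereal (real_of_int (path_weight w es1)) +
          ereal (real_of_int (w e)) + ereal (real_of_int (path_weight w es2'))" by simp
      also have "\<dots> \<le> summary bt E w q ?\<gamma> qc + ereal (real_of_int (w e)) + sum_list (map (gweight bt E w) gs)"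
        using sum1 gs(3) by (intro add_mono) auto
      finally show "ereal (real_of_int (path_weight w es)) \<le> sum_list (map (gweight bt E w) (SumE q ?\<gamma> qc # PushE e # gs))"
        by (simp add: add.assoc)
    qed
  qed
qed



lemma nd_decomp: "\<not> distinct (map f gs) \<Longrightarrow> \<exists>A g1 B g2 C. gs = A @ g1 # B @ g2 # C \<and> f g1 = f g2"
proof (induction gs)
  case (Cons a gs)
  show ?case
  proof (cases "f a \<in> f ` set gs")
    case True
    then obtain g2 where g2: "g2 \<in> set gs" "f g2 = f a" by auto
    then obtain B C where "gs = B @ g2 # C" by (meson split_list)
    then show ?thesis using g2
      by (intro exI[of _ "[]"] exI[of _ a] exI[of _ B] exI[of _ g2] exI[of _ C]) auto
  next
    case False
    then have "\<not> distinct (map f gs)" using Cons.prems by simp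
    then obtain A g1 B g2 C where "gs = A @ g1 # B @ g2 # C" "f g1 = f g2" using Cons.IH by blast
    then show ?thesis
      by (intro exI[of _ "a # A"] exI[of _ g1] exI[of _ B] exI[of _ g2] exI[of _ C]) auto
  qed
qed simp



lemma lemB:
  assumes "walk v gs v" "gs \<noteq> []" "positive_cycle wt gs"
  shows "\<exists>gs'. gs' \<noteq> [] \<and> set gs' \<subseteq> set gs \<and> (\<exists>u. walk u gs' u) \<and> distinct (map gsrc gs') \<and> positive_cycle wt gs'"
  using assms
proof (induction "length gs" arbitrary: gs v rule: less_induct)
  case less
  show ?case
  proof (cases "distinct (map gsrc gs)")
    case True then show ?thesis using less.prems by blast
  next
    case False
    then obtain A g1 B g2 C where gs: "gs = A @ g1 # B @ g2 # C" and eq: "gsrc g1 = gsrc g2"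
      using nd_decomp by blast
    have "\<exists>u1 u3. walk v A u1 \<and> gsrc g1 = u1 \<and> walk (gtgt g1) B u3 \<and> gsrc g2 = u3 \<and> walk (gtgt g2) C v"
      using less.prems(1) unfolding gs by (auto simp: walk_append)
    then obtain u1 u3 where wA: "walk v A u1" and s1: "gsrc g1 = u1" and wB: "walk (gtgt g1) B u3"
      and s2: "gsrc g2 = u3" and wC: "walk (gtgt g2) C v" by blast
    define I where "I = g1 # B"
    define Ou where "Ou = A @ g2 # C"
    have wI: "walk u1 I u1" using s1 wB s2 eq by (simp add: I_def)
    have "walk u1 (g2 # C) v" using s1 s2 eq wC by simp
    then have wO: "walk v Ou v" using wA unfolding Ou_def walk_append by blast
    have lI: "length I < length gs" and lO: "length Ou < length gs" by (simp_all add: I_def Ou_def gs)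
    have neI: "I \<noteq> []" and neO: "Ou \<noteq> []" by (simp_all add: I_def Ou_def)
    have sum: "sum_list (map wt gs) = sum_list (map wt I) + sum_list (map wt Ou)"
      by (simp add: gs I_def Ou_def ac_simps)
    have sets: "set gs = set I \<union> set Ou" by (auto simp: gs I_def Ou_def)
    have "positive_cycle wt I \<or> positive_cycle wt Ou"
    proof (rule ccontr)
      assume "\<not> (positive_cycle wt I \<or> positive_cycle wt Ou)"
      then have n: "\<forall>g\<in>set gs. wt g \<noteq> \<infinity>" "sum_list (map wt I) \<le> 0" "sum_list (map wt Ou) \<le> 0"
        using sets by (auto simp: positive_cycle_def not_less)
      have "sum_list (map wt gs) \<le> 0" using n(2,3) sum by (simp add: add_nonpos_nonpos)
      then show False using less.prems(3) n(1) by (auto simp: positive_cycle_def)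
    qed
    then show ?thesis
    proof
      assume "positive_cycle wt I"
      then obtain gs' where "gs' \<noteq> [] \<and> set gs' \<subseteq> set I \<and> (\<exists>u. walk u gs' u) \<and> distinct (map gsrc gs') \<and> positive_cycle wt gs'"
        using less.hyps[OF lI wI neI] by blast
      then show ?thesis using sets by blast
    next
      assume "positive_cycle wt Ou"
      then obtain gs' where "gs' \<noteq> [] \<and> set gs' \<subseteq> set Ou \<and> (\<exists>u. walk u gs' u) \<and> distinct (map gsrc gs') \<and> positive_cycle wt gs'"
        using less.hyps[OF lO wO neO] by blast
      then show ?thesis using sets by blast
    qed
  qed
qed



lemma simple_of: "walk u gs u \<Longrightarrow> gs \<noteq> [] \<Longrightarrow> distinct (map gsrc gs) \<Longrightarrow> set gs \<subseteq> G \<Longrightarrow> is_simple_cycle G gs"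
  using walk_idx[of u gs u] walk_ends[of u gs u] by (auto simp: is_simple_cycle_def)





lemma ereal_aux:
  "min (ereal (real_of_int (N - x))) R \<le> ereal (real_of_int p) \<Longrightarrow>
   min (ereal (real_of_int N)) (ereal (real_of_int x) + R) \<le> ereal (real_of_int (x + p))"
  by (cases R) (auto simp: min_def split: if_splits)

lemma sum_comb:
  assumes x: "x \<in> nondecr_weights bt E w q \<gamma> q2" and p1: "pth E cs1 es1" and h1: "hd cs1 = (\<alpha>, q2)"
    and l1: "last cs1 = (\<alpha>1, q')" and a1: "\<forall>c\<in>set cs1. prefix \<alpha> (fst c)"
    and ne: "\<alpha> \<noteq> []" and lg: "last \<alpha> = \<gamma>"
  shows "\<exists>cs es. pth E cs es \<and> hd cs = (\<alpha>, q) \<and> last cs = (\<alpha>1, q') \<and> (\<forall>c\<in>set cs. prefix \<alpha> (fst c)) \<and>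
     path_weight w es = x + path_weight w es1"
proof -
  obtain csx esx where px: "pth E csx esx" "\<forall>c\<in>set csx. prefix (base_stack bt \<gamma>) (fst c)"
    "hd csx = (base_stack bt \<gamma>, q)" "last csx = (base_stack bt \<gamma>, q2)" "path_weight w esx = x"
    using nd_path[OF x] by blast
  define csy where "csy = map (shiftc (base_stack bt \<gamma>) \<alpha>) csx"
  have py: "pth E csy esx" unfolding csy_def
    by (rule shift_path[OF px(1,2)]) (use ne lg in \<open>simp_all add: base_stack_ne base_stack_last\<close>)
  have csx_ne: "csx \<noteq> []" using pth_ne[OF px(1)] .
  have hy: "hd csy = (\<alpha>, q)" using px(3) csx_ne by (simp add: csy_def shiftc_def hd_map)
  have ly: "last csy = (\<alpha>, q2)" using px(4) csx_ne by (simp add: csy_def shiftc_def last_map)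
  have ay: "\<forall>c\<in>set csy. prefix \<alpha> (fst c)" by (auto simp: csy_def shiftc_def)
  obtain ys0 where ys0: "csy = ys0 @ [(\<alpha>, q2)]" using pth_last_snoc[OF py ly] by blast
  obtain zs where zs: "cs1 = (\<alpha>, q2) # zs" using pth_hd_cons[OF p1 h1] by blast
  have pp: "pth E (ys0 @ (\<alpha>, q2) # zs) (esx @ es1)" using pth_append py p1 ys0 zs by metis
  have hh: "hd (ys0 @ (\<alpha>, q2) # zs) = (\<alpha>, q)" using hy ys0 by (cases ys0) auto
  have ll: "last (ys0 @ (\<alpha>, q2) # zs) = (\<alpha>1, q')" using l1 zs by simp
  have aa: "\<forall>c\<in>set (ys0 @ (\<alpha>, q2) # zs). prefix \<alpha> (fst c)" using ay a1 ys0 zs by auto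
  show ?thesis
    using pp hh ll aa px(5) by (intro exI[of _ "ys0 @ (\<alpha>, q2) # zs"] exI[of _ "esx @ es1"]) (simp add: path_weight_append)
qed

lemma lemC:
  assumes "walk (q, \<gamma>) gs (q', \<gamma>')" "set gs \<subseteq> summary_graph bt E w" "\<alpha> \<noteq> []" "last \<alpha> = \<gamma>"
  shows "\<exists>cs es \<alpha>'. pth E cs es \<and> hd cs = (\<alpha>, q) \<and> last cs = (\<alpha>', q') \<and> \<alpha>' \<noteq> [] \<and> last \<alpha>' = \<gamma>' \<and>
     (\<forall>c\<in>set cs. prefix \<alpha> (fst c)) \<and>
     min (ereal (real_of_int N)) (sum_list (map (gweight bt E w) gs)) \<le> ereal (real_of_int (path_weight w es))"
  using assms
proof (induction gs arbitrary: q \<gamma> \<alpha> N)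
  case Nil
  then show ?case
    by (intro exI[of _ "[(\<alpha>, q)]"] exI[of _ "[]"] exI[of _ \<alpha>]) (auto simp: path_weight_def min_le_iff_disj)
next
  case (Cons g gs)
  have rest: "set gs \<subseteq> summary_graph bt E w" using Cons.prems(2) by simp
  show ?case
  proof (cases g)
    case (SumE a b q2)
    have ab: "a = q" "b = \<gamma>" and wr: "walk (q2, \<gamma>) gs (q', \<gamma>')" using Cons.prems(1) SumE by auto
    have gin: "summary bt E w q \<gamma> q2 > -\<infinity>" using Cons.prems(2) SumE ab by (auto simp: sg_SumE)
    define S where "S = summary bt E w q \<gamma> q2"
    define R where "R = sum_list (map (gweight bt E w) gs)"
    have gw: "sum_list (map (gweight bt E w) (g # gs)) = S + R" using SumE ab by (simp add: S_def R_def)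
    show ?thesis
    proof (cases S)
      case (real r)
      obtain x where x: "x \<in> nondecr_weights bt E w q \<gamma> q2" "r = real_of_int x"
        using summary_fin[of bt E w q \<gamma> q2 r] real S_def by auto
      obtain cs1 es1 \<alpha>1 where IH: "pth E cs1 es1" "hd cs1 = (\<alpha>, q2)" "last cs1 = (\<alpha>1, q')" "\<alpha>1 \<noteq> []"
        "last \<alpha>1 = \<gamma>'" "\<forall>c\<in>set cs1. prefix \<alpha> (fst c)"
        "min (ereal (real_of_int (N - x))) R \<le> ereal (real_of_int (path_weight w es1))"
        using Cons.IH[OF wr rest Cons.prems(3,4), of "N - x"] unfolding R_def by blast
      obtain cs es where c: "pth E cs es" "hd cs = (\<alpha>, q)" "last cs = (\<alpha>1, q')" "\<forall>c\<in>set cs. prefix \<alpha> (fst c)"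
        "path_weight w es = x + path_weight w es1"
        using sum_comb[OF x(1) IH(1,2,3,6) Cons.prems(3,4)] by blast
      have "min (ereal (real_of_int N)) (S + R) \<le> ereal (real_of_int (path_weight w es))"
        using ereal_aux[OF IH(7)] real x(2) c(5) by simp
      then show ?thesis using c IH(4,5) gw by metis
    next
      case PInf
      obtain cs1 es1 \<alpha>1 where IH: "pth E cs1 es1" "hd cs1 = (\<alpha>, q2)" "last cs1 = (\<alpha>1, q')" "\<alpha>1 \<noteq> []"
        "last \<alpha>1 = \<gamma>'" "\<forall>c\<in>set cs1. prefix \<alpha> (fst c)"
        using Cons.IH[OF wr rest Cons.prems(3,4), of 0] by blast
      obtain x where x: "x \<in> nondecr_weights bt E w q \<gamma> q2" "N - path_weight w es1 \<le> x"
        using summary_inf[of bt E w q \<gamma> q2 "N - path_weight w es1"] PInf S_def by auto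
      obtain cs es where c: "pth E cs es" "hd cs = (\<alpha>, q)" "last cs = (\<alpha>1, q')" "\<forall>c\<in>set cs. prefix \<alpha> (fst c)"
        "path_weight w es = x + path_weight w es1"
        using sum_comb[OF x(1) IH(1,2,3,6) Cons.prems(3,4)] by blast
      have "ereal (real_of_int N) \<le> ereal (real_of_int (path_weight w es))" using x(2) c(5) by simp
      then have "min (ereal (real_of_int N)) (S + R) \<le> ereal (real_of_int (path_weight w es))"
        by (simp add: min_le_iff_disj)
      then show ?thesis using c IH(4,5) gw by metis
    next
      case MInf
      then show ?thesis using gin S_def by simp
    qed
  next
    case (PushE e)
    obtain a b c cm where e: "e = (a, b, c, cm)" by (cases e)
    from Cons.prems(2) PushE e obtain z where cm: "cm = Push z" and eE: "e \<in> E" by (auto simp: sg_PushE)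
    have ab: "a = q" "b = \<gamma>" and wr: "walk (c, z) gs (q', \<gamma>')" using Cons.prems(1) PushE e cm by auto
    obtain cs1 es1 \<alpha>1 where IH: "pth E cs1 es1" "hd cs1 = (\<alpha> @ [z], c)" "last cs1 = (\<alpha>1, q')" "\<alpha>1 \<noteq> []"
        "last \<alpha>1 = \<gamma>'" "\<forall>x\<in>set cs1. prefix (\<alpha> @ [z]) (fst x)"
        "min (ereal (real_of_int (N - w e))) (sum_list (map (gweight bt E w) gs)) \<le> ereal (real_of_int (path_weight w es1))"
      using Cons.IH[OF wr rest, of "\<alpha> @ [z]" "N - w e"] by auto
    have st: "step E (\<alpha>, q) e (\<alpha> @ [z], c)" using eE e cm ab Cons.prems(4) by (simp add: step_def stack_top_def)
    obtain zs where zs: "cs1 = (\<alpha> @ [z], c) # zs" using pth_hd_cons IH(1,2) by blast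
    have pp: "pth E ((\<alpha>, q) # cs1) (e # es1)" using st IH(1) zs by simp
    have aa: "\<forall>x\<in>set ((\<alpha>, q) # cs1). prefix \<alpha> (fst x)" using IH(6) prefix_snoc_trans by (metis fst_conv prefix_order.refl set_ConsD)
    have ll: "last ((\<alpha>, q) # cs1) = (\<alpha>1, q')" using IH(3) zs by simp
    have "min (ereal (real_of_int N)) (sum_list (map (gweight bt E w) (g # gs))) \<le> ereal (real_of_int (path_weight w (e # es1)))"
      using ereal_aux[OF IH(7)] PushE by (simp add: path_weight_Cons)
    then show ?thesis using pp aa ll IH(4,5) by (intro exI[of _ "(\<alpha>, q) # cs1"] exI[of _ "e # es1"] exI[of _ \<alpha>1]) simp
  qed
qed




lemma bot_inv:
  assumes "wf_wps bt E" "pth E cs es" "prefix [bt] (fst (hd cs))"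
  shows "\<forall>c\<in>set cs. prefix [bt] (fst c)"
  using assms
proof (induction E cs es rule: pth.induct)
  case (2 E c c' cs e es)
  obtain q1 \<gamma> q2 cm where e: "e = (q1, \<gamma>, q2, cm)" by (cases e)
  have st: "step E c e c'" using 2(3) by simp
  obtain s where s: "fst c = [bt] @ s" using 2(4) by (auto simp: prefix_def)
  have c': "fst c' = apply_com cm (fst c)" and top: "last (fst c) = \<gamma>" and eE: "e \<in> E"
    using st e by (auto simp: step_def stack_top_def)
  have pc': "prefix [bt] (fst c')"
  proof (cases cm)
    case Skip then show ?thesis using c' s by simp
  next
    case (Push y) then show ?thesis using c' s by simp
  next
    case Pop
    have "(q1, \<gamma>, q2, Pop) \<in> E" using eE e Pop by simp
    then have "\<gamma> \<noteq> bt" using 2(2) unfolding wf_wps_def by blast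
    then have "s \<noteq> []" using top s by auto
    then show ?thesis using c' s Pop by (simp add: butlast_append)
  qed
  have "pth E (c' # cs) es" using 2(3) by simp
  then have "\<forall>x\<in>set (c' # cs). prefix [bt] (fst x)" using 2(1) 2(2) pc' by simp
  then show ?case using 2(4) by simp
qed auto

lemma lemR:
  assumes "((q0, bt), v) \<in> (graph_rel (summary_graph bt E w))\<^sup>*"
  shows "\<exists>cs es \<alpha>. pth E cs es \<and> hd cs = ([bt], q0) \<and> last cs = (\<alpha>, fst v) \<and> \<alpha> \<noteq> [] \<and> last \<alpha> = snd v"
  using assms
proof (induction rule: rtrancl_induct)
  case base
  show ?case by (intro exI[of _ "[([bt], q0)]"] exI[of _ "[]"] exI[of _ "[bt]"]) simp
next
  case (step y z)
  obtain cs es \<alpha> where p: "pth E cs es" "hd cs = ([bt], q0)" "last cs = (\<alpha>, fst y)" "\<alpha> \<noteq> []" "last \<alpha> = snd y"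
    using step.IH by blast
  from step.hyps(2) obtain g where g: "g \<in> summary_graph bt E w" "gsrc g = y" "gtgt g = z"
    by (auto simp: graph_rel_def)
  have wg: "walk (fst y, snd y) [g] (fst z, snd z)" using g by simp
  have sg: "set [g] \<subseteq> summary_graph bt E w" using g by simp
  obtain cs1 es1 \<alpha>1 where c: "pth E cs1 es1" "hd cs1 = (\<alpha>, fst y)" "last cs1 = (\<alpha>1, fst z)" "\<alpha>1 \<noteq> []"
    "last \<alpha>1 = snd z"
    using lemC[OF wg sg p(4,5)] by blast
  obtain xs where xs: "cs = xs @ [(\<alpha>, fst y)]" using pth_last_snoc[OF p(1,3)] by blast
  obtain zs where zs: "cs1 = (\<alpha>, fst y) # zs" using pth_hd_cons[OF c(1,2)] by blast
  have pp: "pth E (xs @ (\<alpha>, fst y) # zs) (es @ es1)" using pth_append p(1) c(1) xs zs by metis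
  have hh: "hd (xs @ (\<alpha>, fst y) # zs) = ([bt], q0)" using p(2) xs by (cases xs) auto
  have ll: "last (xs @ (\<alpha>, fst y) # zs) = (\<alpha>1, fst z)" using c(3) zs by simp
  show ?case using pp hh ll c(4,5) by blast
qed

lemma sum_list_inf: "\<exists>g\<in>set gs. wt g = \<infinity> \<Longrightarrow> sum_list (map wt gs) = (\<infinity>::ereal)"
  by (induction gs) auto

theorem lemma5:
  fixes bt :: "'g::finite" and q0 :: "'q::finite"
    and E :: "('q,'g) edge set" and w :: "('q,'g) edge \<Rightarrow> int"
  assumes "wf_wps bt E"
  shows "has_reachable_good_cycle bt q0 E w \<longleftrightarrow> has_reachable_positive_simple_cycle bt q0 E w"
proof
  assume "has_reachable_good_cycle bt q0 E w"
  then obtain cs0 es0 cs es where p0: "pth E cs0 es0" and h0: "hd cs0 = ([bt], q0)"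
    and p: "pth E cs es" and pos: "path_weight w es > 0" and lm: "is_local_min cs 0"
    and sq: "snd (hd cs) = snd (last cs)" and tq: "stack_top (fst (hd cs)) = stack_top (fst (last cs))"
    and hl: "hd cs = last cs0"
    unfolding has_reachable_good_cycle_def good_cycle_def is_path_pth by blast
  obtain \<alpha>1 q1 where a1: "last cs0 = (\<alpha>1, q1)" by (cases "last cs0")
  have bi: "\<forall>c\<in>set cs0. prefix [bt] (fst c)" using bot_inv[OF assms p0] h0 by simp
  have "prefix [bt] \<alpha>1" using bi a1 pth_ne[OF p0] by (metis fst_conv last_in_set)
  then have ne1: "\<alpha>1 \<noteq> []" by auto
  obtain gs0 where g0: "set gs0 \<subseteq> summary_graph bt E w" "walk (q0, bt) gs0 (q1, last \<alpha>1)"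
    using lemA[OF p0 _ h0 _ a1, of bt w] bi by auto
  obtain \<alpha>n qn where an: "last cs = (\<alpha>n, qn)" by (cases "last cs")
  have hc: "hd cs = (\<alpha>1, q1)" using hl a1 by simp
  have qn: "qn = q1" and tn: "last \<alpha>n = last \<alpha>1" using sq tq hc an by (auto simp: stack_top_def)
  have allc: "\<forall>c\<in>set cs. prefix \<alpha>1 (fst c)" using lm local_min_iff[OF pth_ne[OF p]] hc by simp
  obtain gs where g: "set gs \<subseteq> summary_graph bt E w" "walk (q1, last \<alpha>1) gs (qn, last \<alpha>n)"
    "ereal (real_of_int (path_weight w es)) \<le> sum_list (map (gweight bt E w) gs)"
    using lemA[OF p allc hc ne1 an, of bt w] by blast
  have "0 < ereal (real_of_int (path_weight w es))" using pos by simp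
  then have sp: "sum_list (map (gweight bt E w) gs) > 0" using g(3) by (rule less_le_trans)
  then have gne: "gs \<noteq> []" by auto
  have pc: "positive_cycle (gweight bt E w) gs" using sp by (simp add: positive_cycle_def)
  have wc: "walk (q1, last \<alpha>1) gs (q1, last \<alpha>1)" using g(2) qn tn by simp
  obtain gs' u where gs': "gs' \<noteq> []" "set gs' \<subseteq> set gs" "walk u gs' u" "distinct (map gsrc gs')"
    "positive_cycle (gweight bt E w) gs'"
    using lemB[OF wc gne pc] by blast
  have sub': "set gs' \<subseteq> summary_graph bt E w" using gs'(2) g(1) by blast
  have simp': "is_simple_cycle (summary_graph bt E w) gs'" by (rule simple_of[OF gs'(3,1,4) sub'])
  have r1: "((q0, bt), (q1, last \<alpha>1)) \<in> (graph_rel (summary_graph bt E w))\<^sup>*"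
    using walk_reach[OF g0(2,1)] by blast
  have "hd gs' \<in> set gs" using gs'(1,2) by auto
  then have r2: "((q1, last \<alpha>1), gsrc (hd gs')) \<in> (graph_rel (summary_graph bt E w))\<^sup>*"
    using walk_reach[OF wc g(1)] by blast
  show "has_reachable_positive_simple_cycle bt q0 E w"
    unfolding has_reachable_positive_simple_cycle_def
    using simp' gs'(5) rtrancl_trans[OF r1 r2] by blast
next
  assume "has_reachable_positive_simple_cycle bt q0 E w"
  then obtain gs where sc: "is_simple_cycle (summary_graph bt E w) gs" and pc: "positive_cycle (gweight bt E w) gs"
    and r: "((q0, bt), gsrc (hd gs)) \<in> (graph_rel (summary_graph bt E w))\<^sup>*"
    unfolding has_reachable_positive_simple_cycle_def by blast
  obtain q \<gamma> where v: "gsrc (hd gs) = (q, \<gamma>)" by (cases "gsrc (hd gs)")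
  have ne: "gs \<noteq> []" and sub: "set gs \<subseteq> summary_graph bt E w" using sc by (auto simp: is_simple_cycle_def)
  have wc: "walk (q, \<gamma>) gs (q, \<gamma>)" using idx_walk[OF ne] sc v by (auto simp: is_simple_cycle_def)
  obtain cs0 es0 \<alpha> where r0: "pth E cs0 es0" "hd cs0 = ([bt], q0)" "last cs0 = (\<alpha>, q)" "\<alpha> \<noteq> []" "last \<alpha> = \<gamma>"
    using lemR[OF r] v by auto
  obtain cs es \<alpha>' where c: "pth E cs es" "hd cs = (\<alpha>, q)" "last cs = (\<alpha>', q)" "\<alpha>' \<noteq> []" "last \<alpha>' = \<gamma>"
    "\<forall>c\<in>set cs. prefix \<alpha> (fst c)"
    "min (ereal (real_of_int 1)) (sum_list (map (gweight bt E w) gs)) \<le> ereal (real_of_int (path_weight w es))"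
    using lemC[OF wc sub r0(4,5), of 1] by blast
  have "sum_list (map (gweight bt E w) gs) = \<infinity> \<or> sum_list (map (gweight bt E w) gs) > 0"
    using pc sum_list_inf[of gs "gweight bt E w"] by (auto simp: positive_cycle_def)
  then have "0 < min (ereal (real_of_int 1)) (sum_list (map (gweight bt E w) gs))" by auto
  then have "0 < ereal (real_of_int (path_weight w es))" using c(7) by (rule less_le_trans)
  then have pos: "path_weight w es > 0" by simp
  have "good_cycle E w cs es"
    unfolding good_cycle_def is_path_pth
    using c pos local_min_iff[OF pth_ne[OF c(1)]] by (simp add: stack_top_def r0(5))
  then show "has_reachable_good_cycle bt q0 E w"
    unfolding has_reachable_good_cycle_def is_path_pth using r0(1,2,3) c(2) by metis
qed


end
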